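(* Let $p=p_n\in(0,1)$ with $f_n:=n p_n\to 0$, and let $G\sim\mathcal{G}(n,p_n)$ with $m$ its number of edges. Let $\phi(\delta)=(1+\delta)\ln(1+\delta)-\delta$, $\delta_n=\phi^{-1}(2\ln 2/f_n)$ and $C_n=\left(1+(1+\delta_n)\frac{n-1}{n}f_n\right)^{-1}$. For $1\le u\le n$ define $$w_n(u)=\sum_{i=n-u}^{n}\binom{i}{i-(n-u)}(1-p_n)^{\binom{i-(n-u)}{2}}\,\mathbb{P}\left(m\ge\frac{n^2}{2u}-\frac{n}{2}\right),$$ and $\mathbb{T}^2(n,p)=\sum_{nC_n\le u\le n}w_n(u)$. Then $\mathbb{T}^2(n,p)$ has subexponential growth in $n$. Furthermore, there exist a constant $h>0$ and a sequence $\gamma_n$ of at most polynomial growth such that $$\mathbb{T}^2(n,p)\le\gamma_n\exp\left(h\cdot n\cdot\left(\ln\frac{1}{f_n}\right)^{-1}\ln\left(\ln\frac{1}{f_n}\right)\right).$$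
   Context: $\mathcal{G}(n,p)$ is the binomial random graph on $n$ vertices in which each of the $\binom{n}{2}$ pairs of vertices is an edge with probability $p$, independently. $\phi$ is increasing on $[0,\infty)$, so $\phi^{-1}$ is well defined. The quantity $w_n(u)$ is the paper's bound on the expected number of nodes with potential $u$ in the best-first branch-and-bound search tree for maximum independent set (potential of a partial solution $S\subseteq\{v_1,\dots,v_i\}$ being $|S|+n-i$). *)

theory Defs
  imports "HOL-Probability.Probability"
begin

definition phi :: "real \<Rightarrow> real" where
  "phi \<delta> = (1 + \<delta>) * ln (1 + \<delta>) - \<delta>"

text \<open>Inverse of phi on [0,infinity) (phi is increasing there, phi 0 = 0, phi tends to infinity).\<close>
definition phi_inv :: "real \<Rightarrow> real" where
  "phi_inv y = (THE \<delta>. \<delta> \<ge> 0 \<and> phi \<delta> = y)"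

definition fseq :: "(nat \<Rightarrow> real) \<Rightarrow> nat \<Rightarrow> real" where
  "fseq p n = real n * p n"

definition delta_seq :: "(nat \<Rightarrow> real) \<Rightarrow> nat \<Rightarrow> real" where
  "delta_seq p n = phi_inv (2 * ln 2 / fseq p n)"

definition C_seq :: "(nat \<Rightarrow> real) \<Rightarrow> nat \<Rightarrow> real" where
  "C_seq p n = inverse (1 + (1 + delta_seq p n) * ((real n - 1) / real n) * fseq p n)"

text \<open>P(m \<ge> x) where m, the number of edges of G(n,q), is Binomial(n choose 2, q).\<close>
definition edge_tail :: "nat \<Rightarrow> real \<Rightarrow> real \<Rightarrow> real" where
  "edge_tail n q x = measure_pmf.prob (binomial_pmf (n choose 2) q) {k. real k \<ge> x}"

definition w_n :: "(nat \<Rightarrow> real) \<Rightarrow> nat \<Rightarrow> nat \<Rightarrow> real" where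
  "w_n p n u = (\<Sum>i = n - u..n. real (i choose (i - (n - u)))
        * (1 - p n) ^ ((i - (n - u)) choose 2)
        * edge_tail n (p n) (real n ^ 2 / (2 * real u) - real n / 2))"

definition T2 :: "(nat \<Rightarrow> real) \<Rightarrow> nat \<Rightarrow> real" where
  "T2 p n = (\<Sum>u \<in> {u. 1 \<le> u \<and> u \<le> n \<and> real n * C_seq p n \<le> real u}. w_n p n u)"

end

theory Submission
  imports Defs "HOL-Real_Asymp.Real_Asymp"
begin

lemma phi_deriv: "x > -1 \<Longrightarrow> DERIV phi x :> ln (1 + x)"
  unfolding phi_def [abs_def]
  by (auto intro!: derivative_eq_intros simp: field_simps)

lemma phi_cont: "0 \<le> x \<Longrightarrow> isCont phi x"
  using phi_deriv DERIV_isCont by force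

lemma phi_strict: assumes "0 \<le> a" "a < b" shows "phi a < phi b"
proof (rule DERIV_pos_imp_increasing_open[OF assms(2)])
  fix x assume "a < x" "x < b"
  then show "\<exists>y. DERIV phi x :> y \<and> y > 0" using assms
    by (intro exI[of _ "ln (1+x)"]) (auto intro: phi_deriv)
next
  show "continuous_on {a..b} phi" using assms
    by (intro continuous_at_imp_continuous_on) (auto intro: phi_cont)
qed

lemma phi_0: "phi 0 = 0" by (simp add: phi_def)

lemma phi_inv_le:
  assumes "0 \<le> y" "0 \<le> D" "y \<le> phi D"
  shows "0 \<le> phi_inv y \<and> phi_inv y \<le> D"
proof -
  obtain x where x: "0 \<le> x" "x \<le> D" "phi x = y"
  proof -
    have "\<forall>x. 0 \<le> x \<and> x \<le> D \<longrightarrow> isCont phi x" using phi_cont by blast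
    from IVT[of phi 0 y D, OF _ assms(3) assms(2) this] assms(1) phi_0
    show ?thesis using that by auto
  qed
  have u: "z = x" if "0 \<le> z" "phi z = y" for z
  proof (rule linorder_cases[of z x])
    assume "z < x" then have "phi z < phi x" using phi_strict that by blast
    then show ?thesis using that x by simp
  next
    assume "x < z" then have "phi x < phi z" using phi_strict x by blast
    then show ?thesis using that x by simp
  qed
  have "phi_inv y = x" unfolding phi_inv_def
    by (rule the_equality) (use x u in blast)+
  with x show ?thesis by simp
qed

lemma ln_half: "0 < (t::real) \<Longrightarrow> ln t \<le> t / 2"
proof -
  assume t: "0 < t"
  have "ln t = 2 * ln (sqrt t)" using t by (simp add: ln_sqrt)
  also have "\<dots> \<le> 2 * (sqrt t - 1)" using t ln_le_minus_one[of "sqrt t"] by simp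
  also have "\<dots> \<le> t / 2"
  proof -
    have "(sqrt t - 2)^2 \<ge> 0" by simp
    then show ?thesis using t by (simp add: power2_eq_square algebra_simps)
  qed
  finally show ?thesis .
qed

lemma ln4: "1 \<le> ln (4::real)"
proof -
  have "exp 1 \<le> (4::real)" using exp_le by simp
  then show ?thesis by (simp add: ln_ge_iff)
qed

lemma delta_bound:
  fixes f :: real
  assumes f: "0 < f" and L: "8 \<le> ln (1/f)"
  shows "0 \<le> phi_inv (2 * ln 2 / f) \<and> (1 + phi_inv (2 * ln 2 / f)) * f \<le> 8 / ln (1/f)"
proof -
  define y where "y = 2 * ln 2 / f"
  define L where "L = ln (1/f)"
  have ln22: "ln (4::real) = 2 * ln 2"
    using ln_realpow[of 2 2] by simp
  have ypos: "0 < y" unfolding y_def using f by simp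
  have "ln y = ln (2 * ln 2) + L"
    unfolding y_def L_def using f by (simp add: ln_div ln_mult)
  moreover have "ln (2 * ln 2) \<ge> (0::real)" using ln4 ln22 by simp
  ultimately have lny: "ln y \<ge> L" by simp
  have L8: "L \<ge> 8" using L L_def by simp
  have lnypos: "ln y > 0" using lny L8 by simp
  define A where "A = 4 * y / ln y"
  have "ln y \<le> y - 1" using ln_le_minus_one ypos by simp
  then have A1: "A \<ge> 1" unfolding A_def using lnypos ypos by (simp add: field_simps)
  have "ln A = ln 4 + ln y - ln (ln y)"
    unfolding A_def using ypos lnypos by (simp add: ln_div ln_mult)
  moreover have "ln (ln y) \<le> ln y / 2" using ln_half lnypos by blast
  ultimately have lnA: "ln A - 1 \<ge> ln y / 2" using ln4 by simp
  have "phi (A - 1) = A * ln A - (A - 1)" by (simp add: phi_def)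
  also have "\<dots> \<ge> A * (ln A - 1)" by (simp add: algebra_simps)
  finally have "phi (A - 1) \<ge> A * (ln A - 1)" .
  moreover have "A * (ln A - 1) \<ge> A * (ln y / 2)"
    using lnA A1 by (intro mult_left_mono) auto
  moreover have "A * (ln y / 2) = 2 * y" unfolding A_def using lnypos by simp
  ultimately have "phi (A - 1) \<ge> y" using ypos by linarith
  then have d: "0 \<le> phi_inv y \<and> phi_inv y \<le> A - 1"
    using phi_inv_le[of y "A - 1"] A1 ypos by simp
  then have "(1 + phi_inv y) * f \<le> A * f" using f by (intro mult_right_mono) auto
  also have "A * f = 8 * ln 2 / ln y" unfolding A_def y_def using f by (simp add: field_simps)
  also have "\<dots> \<le> 8 / ln y" using ln_2_less_1 lnypos by (simp add: divide_right_mono)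
  also have "\<dots> \<le> 8 / L" using lny L8 lnypos by (simp add: frac_le)
  finally show ?thesis using d unfolding y_def L_def by simp
qed

lemma binom_bound:
  fixes e :: real
  assumes e: "0 < e" "e \<le> 1" and k: "real k \<le> e * real n"
  shows "real (n choose k) \<le> exp (e * n + e * n * ln (1/e))"
proof (cases "k \<le> n")
  case False then show ?thesis by (simp add: binomial_eq_0)
next
  case True
  have "real (n choose k) * e ^ k \<le> (\<Sum>j\<le>n. real (n choose j) * e ^ j * 1 ^ (n - j))"
  proof -
    have "real (n choose k) * e ^ k * 1 ^ (n - k) \<le> (\<Sum>j\<le>n. real (n choose j) * e ^ j * 1 ^ (n - j))"
      using True e by (intro member_le_sum) auto
    then show ?thesis by simp
  qed
  also have "\<dots> = (e + 1) ^ n" by (rule binomial_ring[symmetric])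
  also have "\<dots> \<le> exp e ^ n" using e by (intro power_mono) (auto simp: add.commute intro: exp_ge_add_one_self_aux)
  also have "\<dots> = exp (e * n)" by (simp add: exp_of_nat_mult[symmetric] mult.commute)
  finally have 1: "real (n choose k) * e ^ k \<le> exp (e * n)" .
  have "e powr (e * n) \<le> e powr (real k)" using e k by (intro powr_mono') auto
  also have "e powr (real k) = e ^ k" using e by (simp add: powr_realpow)
  finally have 2: "e powr (e * n) \<le> e ^ k" .
  have "real (n choose k) * e powr (e * n) \<le> exp (e * n)"
    using 1 2 e by (smt (verit) mult_left_mono of_nat_0_le_iff)
  then have "real (n choose k) \<le> exp (e * n) / e powr (e * n)"
    using e by (simp add: field_simps)
  also have "\<dots> = exp (e * n + e * n * ln (1/e))"
    using e by (simp add: powr_def exp_diff ln_div algebra_simps)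
  finally show ?thesis .
qed

lemma T2_bound:
  fixes p :: "nat \<Rightarrow> real"
  assumes n: "n \<ge> 1" and pn: "0 < p n" "p n < 1" and L: "8 \<le> ln (1 / fseq p n)"
  shows "T2 p n \<le> (real n + 1) ^ 2 * exp (8 * real n * inverse (ln (1 / fseq p n)) * ln (ln (1 / fseq p n)))"
proof -
  define f where "f = fseq p n"
  define L where "L = ln (1 / f)"
  define \<delta> where "\<delta> = delta_seq p n"
  define e where "e = 8 / L"
  have f: "0 < f" unfolding f_def fseq_def using n pn by simp
  have L8: "8 \<le> L" using L unfolding L_def f_def .
  have db: "0 \<le> \<delta> \<and> (1 + \<delta>) * f \<le> e"
    using delta_bound[OF f L[folded f_def]] unfolding \<delta>_def delta_seq_def e_def L_def f_def by simp
  have e: "0 < e" "e \<le> 1" unfolding e_def using L8 by auto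
  define a where "a = (1 + \<delta>) * ((real n - 1) / real n) * f"
  have a0: "0 \<le> a" unfolding a_def using db f n by auto
  have "a \<le> (1 + \<delta>) * f"
  proof -
    have "(real n - 1) / real n \<le> 1" using n by simp
    then have "(1 + \<delta>) * ((real n - 1) / real n) \<le> (1 + \<delta>) * 1"
      using db by (intro mult_left_mono) auto
    then show ?thesis unfolding a_def using f by (intro mult_right_mono) auto
  qed
  with db have ae: "a \<le> e" by simp
  have C: "C_seq p n = 1 / (1 + a)"
    unfolding C_seq_def a_def \<delta>_def f_def by (simp add: divide_inverse)
  have "1 - 1 / (1 + a) \<le> e"
  proof -
    have "1 - 1 / (1 + a) = a / (1 + a)" using a0 by (simp add: field_simps)
    also have "\<dots> \<le> a" using a0 by (simp add: divide_le_eq) (simp add: algebra_simps)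
    finally show ?thesis using ae by simp
  qed
  then have Cb: "real n - real n * C_seq p n \<le> e * real n"
    unfolding C using mult_right_mono[of "1 - 1 / (1 + a)" e "real n"] by (simp add: algebra_simps)
  define B where "B = exp (8 * real n * inverse L * ln L)"
  have Bexp: "e * n + e * n * ln (1/e) \<le> 8 * real n * inverse L * ln L"
  proof -
    have ln8: "1 \<le> ln (8::real)"
    proof -
      have "ln (4::real) \<le> ln 8" by (subst ln_le_cancel_iff) auto
      then show ?thesis by (rule order_trans[OF ln4])
    qed
    have eL: "1/e = L/8" unfolding e_def by simp
    have "ln (1/e) = ln (L/8)" by (simp only: eL)
    also have "ln (L/8) = ln L - ln 8" using L8 by (intro ln_divide_pos) auto
    finally have "ln (1/e) = ln L - ln 8" .
    then have "1 + ln (1/e) \<le> ln L" using ln8 by linarith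
    then have 1: "e * n * (1 + ln (1/e)) \<le> e * n * ln L" using e by (intro mult_left_mono) auto
    have 2: "e * n * ln L = 8 * real n * inverse L * ln L" by (simp add: e_def divide_inverse)
    have 3: "e * n * (1 + ln (1/e)) = e * n + e * n * ln (1/e)" by (simp add: distrib_left)
    show ?thesis using 1 2 3 by linarith
  qed
  have trm: "real (i choose (i - (n - u))) * (1 - p n) ^ ((i - (n - u)) choose 2)
        * edge_tail n (p n) (real n ^ 2 / (2 * real u) - real n / 2) \<le> B"
    if u: "u \<le> n" "real n * C_seq p n \<le> real u" and i: "i \<in> {n - u..n}" for u i
  proof -
    have t1: "edge_tail n (p n) (real n ^ 2 / (2 * real u) - real n / 2) \<le> 1"
      "0 \<le> edge_tail n (p n) (real n ^ 2 / (2 * real u) - real n / 2)"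
      unfolding edge_tail_def by auto
    have t2: "(1 - p n) ^ ((i - (n - u)) choose 2) \<le> 1" "0 \<le> (1 - p n) ^ ((i - (n - u)) choose 2)"
      using pn by (auto intro: power_le_one)
    have "real (i choose (i - (n - u))) * (1 - p n) ^ ((i - (n - u)) choose 2)
        * edge_tail n (p n) (real n ^ 2 / (2 * real u) - real n / 2) \<le> real (i choose (i - (n - u))) * 1 * 1"
      using t1 t2 by (intro mult_mono) auto
    also have "\<dots> = real (i choose (n - u))"
      using i binomial_symmetric[of "n - u" i] by auto
    also have "\<dots> \<le> real (n choose (n - u))" using i by (simp add: binomial_right_mono)
    also have "real (n choose (n - u)) \<le> exp (e * n + e * n * ln (1/e))"
      using binom_bound[OF e, of "n - u" n] Cb u by (simp add: of_nat_diff)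
    also have "\<dots> \<le> B" unfolding B_def L_def f_def using Bexp[unfolded L_def f_def] by simp
    finally show ?thesis .
  qed
  have w: "w_n p n u \<le> (real n + 1) * B" if u: "u \<le> n" "real n * C_seq p n \<le> real u" for u
  proof -
    have "w_n p n u \<le> real (card {n - u..n}) * B"
      unfolding w_n_def by (rule sum_bounded_above) (use trm u in blast)
    also have "\<dots> \<le> (real n + 1) * B"
      using u by (intro mult_right_mono) (auto simp: B_def)
    finally show ?thesis .
  qed
  define S where "S = {u. 1 \<le> u \<and> u \<le> n \<and> real n * C_seq p n \<le> real u}"
  have "T2 p n \<le> real (card S) * ((real n + 1) * B)"
    unfolding T2_def S_def[symmetric] by (rule sum_bounded_above) (use w S_def in blast)
  also have "\<dots> \<le> (real n + 1) * ((real n + 1) * B)"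
  proof (intro mult_right_mono)
    have "S \<subseteq> {1..n}" unfolding S_def by auto
    then have "card S \<le> n" using card_mono[of "{1..n}" S] by simp
    then show "real (card S) \<le> real n + 1" by simp
  qed (auto simp: B_def)
  finally show ?thesis unfolding B_def L_def f_def by (simp add: power2_eq_square mult.assoc)
qed

lemma poly_exp: "0 < (c::real) \<Longrightarrow> ((\<lambda>x::real. (x + 1)^2 / exp (c * x)) \<longlongrightarrow> 0) at_top"
  by real_asymp

lemma lnx_x: "((\<lambda>x::real. ln x / x) \<longlongrightarrow> 0) at_top"
  by real_asymp

theorem proposition3:
  fixes p :: "nat \<Rightarrow> real"
  assumes p_range: "\<And>n. 0 < p n \<and> p n < 1"
    and f_lim: "(\<lambda>n. real n * p n) \<longlonglongrightarrow> 0"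
  shows "(\<forall>\<epsilon>>0. \<forall>\<^sub>F n in sequentially. T2 p n \<le> exp (\<epsilon> * real n))
    \<and> (\<exists>h>0. \<exists>\<gamma> :: nat \<Rightarrow> real. \<exists>c k. (\<forall>n. \<gamma> n \<le> c * (real n + 1) ^ k)
         \<and> (\<forall>\<^sub>F n in sequentially.
              T2 p n \<le> \<gamma> n * exp (h * real n * inverse (ln (1 / fseq p n))
                                        * ln (ln (1 / fseq p n)))))"
proof -
  define L where "L n = ln (1 / fseq p n)" for n
  have fpos: "\<forall>\<^sub>F n in sequentially. fseq p n > 0"
    using eventually_ge_at_top[of "1::nat"]
    by eventually_elim (use p_range in \<open>auto simp: fseq_def\<close>)
  have "filterlim (fseq p) (at_right 0) sequentially"
    using f_lim fpos unfolding fseq_def[abs_def] by (intro tendsto_imp_filterlim_at_right) auto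
  then have "filterlim (\<lambda>n. inverse (fseq p n)) at_top sequentially"
    by (rule filterlim_compose[OF filterlim_inverse_at_top_right])
  then have Lt: "filterlim L at_top sequentially"
    unfolding L_def by (auto simp: divide_inverse intro: filterlim_compose[OF ln_at_top])
  have ev: "\<forall>\<^sub>F n in sequentially. T2 p n \<le> (real n + 1) ^ 2 * exp (8 * real n * inverse (L n) * ln (L n))"
  proof -
    have "\<forall>\<^sub>F n in sequentially. L n \<ge> 8" using Lt by (simp add: filterlim_at_top)
    then show ?thesis using eventually_ge_at_top[of "1::nat"]
      by eventually_elim (use p_range T2_bound in \<open>auto simp: L_def\<close>)
  qed
  have part2: "\<exists>h>0. \<exists>\<gamma> :: nat \<Rightarrow> real. \<exists>c k. (\<forall>n. \<gamma> n \<le> c * (real n + 1) ^ k)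
         \<and> (\<forall>\<^sub>F n in sequentially.
              T2 p n \<le> \<gamma> n * exp (h * real n * inverse (ln (1 / fseq p n))
                                        * ln (ln (1 / fseq p n))))"
    apply (rule exI[of _ 8])
    apply (rule conjI)
     apply simp
    apply (rule exI[of _ "\<lambda>n. (real n + 1) ^ 2"])
    apply (rule exI[of _ 1])
    apply (rule exI[of _ 2])
    using ev by (simp add: L_def)
  have part1: "\<forall>\<^sub>F n in sequentially. T2 p n \<le> exp (\<epsilon> * real n)" if \<epsilon>: "\<epsilon> > 0" for \<epsilon>
  proof -
    have "((\<lambda>n. ln (L n) / L n) \<longlongrightarrow> 0) sequentially"
      using filterlim_compose[OF lnx_x Lt] by simp
    then have e1: "\<forall>\<^sub>F n in sequentially. ln (L n) / L n < \<epsilon> / 16"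
      using \<epsilon> by (intro order_tendstoD(2)) auto
    have "((\<lambda>n. (real n + 1)^2 / exp (\<epsilon>/2 * real n)) \<longlongrightarrow> 0) sequentially"
      using filterlim_compose[OF poly_exp[of "\<epsilon>/2"] filterlim_real_sequentially] \<epsilon> by simp
    then have e2: "\<forall>\<^sub>F n in sequentially. (real n + 1)^2 / exp (\<epsilon>/2 * real n) < 1"
      by (intro order_tendstoD(2)) auto
    have e3: "\<forall>\<^sub>F n in sequentially. L n > 0" using Lt by (simp add: filterlim_at_top_dense)
    show ?thesis using ev e1 e2 e3
    proof eventually_elim
      case (elim n)
      have "8 * real n * inverse (L n) * ln (L n) = 8 * real n * (ln (L n) / L n)"
        by (simp add: divide_inverse)
      also have "\<dots> \<le> 8 * real n * (\<epsilon> / 16)" using elim by (intro mult_left_mono) auto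
      finally have a: "exp (8 * real n * inverse (L n) * ln (L n)) \<le> exp (\<epsilon>/2 * real n)" by simp
      have b: "(real n + 1)^2 \<le> exp (\<epsilon>/2 * real n)" using elim by (simp add: divide_less_eq)
      have "T2 p n \<le> (real n + 1) ^ 2 * exp (8 * real n * inverse (L n) * ln (L n))" using elim by simp
      also have "\<dots> \<le> exp (\<epsilon>/2 * real n) * exp (\<epsilon>/2 * real n)"
        using a b by (intro mult_mono) auto
      also have "\<dots> = exp (\<epsilon> * real n)" by (simp flip: exp_add)
      finally show ?case .
    qed
  qed
  show ?thesis using part1 part2 by blast
qed

end
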